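(* Let $a,b,d\in\mathbb C$ with $a\notin\mathbb Z$ and $d\notin\{0,-1,-2,\dots\}$. Then, as an identity of formal power series in $x,y$, $${}_1F_1(a;d;x)\,{}_1F_1(b;1-a;y)=\mathrm H_4(a,b;d;x,-y)+\sum_{k=1}^\infty\sum_{l=1}^k\frac{(-1)^{k-l}(k-1)!}{(l-1)!\,l!\,(k-l)!}\,\frac{(b)_k}{(1-a)_k(1-a)_{k-l}(d)_l}\,x^ly^k\,\mathrm H_4(a-k+l,b+k;d+l;x,-y).$$
   Context: Pochhammer symbol: $(\lambda)_k=\Gamma(\lambda+k)/\Gamma(\lambda)$ for every integer $k$ (possibly negative) whenever defined; $(\lambda)_0=1$. ${}_1F_1(a;c;x)=\sum_{k\ge0}\frac{(a)_k}{(c)_k k!}x^k$. Confluent Horn function $\mathrm H_4(a,b;d;x,y)=\sum_{p,q\ge0}\frac{(a)_{p-q}(b)_q}{(d)_p\,p!\,q!}x^py^q$. All functions are regarded as formal power series in $x,y$; the infinite double sum converges in the formal (degree) topology. *)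

theory Defs
  imports "HOL-Analysis.Analysis"
begin

text \<open>Pochhammer symbol with integer index:
  (lam)_k = Gamma(lam+k)/Gamma(lam); for k = -m < 0 this is 1/((lam-m)(lam-m+1)...(lam-1)).\<close>
definition poch_int :: "complex \<Rightarrow> int \<Rightarrow> complex" where
  "poch_int lam k = (if 0 \<le> k then pochhammer lam (nat k)
                     else inverse (pochhammer (lam + of_int k) (nat (- k))))"

text \<open>Formal power series in two variables x, y, represented by their coefficient
  arrays: s p q is the coefficient of x^p y^q.\<close>
type_synonym bfps = "nat \<Rightarrow> nat \<Rightarrow> complex"

definition bmult :: "bfps \<Rightarrow> bfps \<Rightarrow> bfps" where
  "bmult s t = (\<lambda>p q. \<Sum>i\<le>p. \<Sum>j\<le>q. s i j * t (p - i) (q - j))"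

definition ser_x :: "(nat \<Rightarrow> complex) \<Rightarrow> bfps" where
  "ser_x f = (\<lambda>p q. if q = 0 then f p else 0)"

definition ser_y :: "(nat \<Rightarrow> complex) \<Rightarrow> bfps" where
  "ser_y f = (\<lambda>p q. if p = 0 then f q else 0)"

text \<open>Coefficients of 1F1(a;c;t) = sum_k (a)_k/((c)_k k!) t^k.\<close>
definition hyp1F1 :: "complex \<Rightarrow> complex \<Rightarrow> nat \<Rightarrow> complex" where
  "hyp1F1 a c k = pochhammer a k / (pochhammer c k * fact k)"

definition H4 :: "complex \<Rightarrow> complex \<Rightarrow> complex \<Rightarrow> bfps" where
  "H4 a b d = (\<lambda>p q. poch_int a (int p - int q) * pochhammer b q
                      / (pochhammer d p * fact p * fact q))"

definition neg_y :: "bfps \<Rightarrow> bfps" where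
  "neg_y s = (\<lambda>p q. (-1) ^ q * s p q)"

definition mono_mult :: "nat \<Rightarrow> nat \<Rightarrow> bfps \<Rightarrow> bfps" where
  "mono_mult l k s = (\<lambda>p q. if l \<le> p \<and> k \<le> q then s (p - l) (q - k) else 0)"

definition bsum :: "('i \<Rightarrow> bfps) \<Rightarrow> 'i set \<Rightarrow> bfps" where
  "bsum F I = (\<lambda>p q. \<Sum>\<^sub>\<infinity>i\<in>I. F i p q)"

definition badd :: "bfps \<Rightarrow> bfps \<Rightarrow> bfps" where
  "badd s t = (\<lambda>p q. s p q + t p q)"

definition bscale :: "complex \<Rightarrow> bfps \<Rightarrow> bfps" where
  "bscale c s = (\<lambda>p q. c * s p q)"

end

theory Submission imports Defs begin

lemma notint_shift: "(a::complex) \<notin> \<int> \<Longrightarrow> a + of_int k \<notin> \<int>"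
proof
  assume "a \<notin> \<int>" "a + of_int k \<in> \<int>"
  then have "a + of_int k - of_int k \<in> \<int>" by (intro Ints_diff) auto
  with \<open>a \<notin> \<int>\<close> show False by simp
qed

lemma notint_nonpos: "(a::complex) \<notin> \<int> \<Longrightarrow> a \<notin> \<int>\<^sub>\<le>\<^sub>0"
  using nonpos_Ints_subset_Ints by blast

lemma Gamma_shift_ne: "(a::complex) \<notin> \<int> \<Longrightarrow> Gamma (a + of_int k) \<noteq> 0"
  by (intro Gamma_nonzero notint_nonpos notint_shift)

lemma poch_int_Gamma:
  assumes "(a::complex) \<notin> \<int>"
  shows "poch_int a k = Gamma (a + of_int k) / Gamma a"
proof (cases "0 \<le> k")
  case True
  then obtain n where n: "k = int n" by (metis nonneg_eq_int)
  show ?thesis using True n pochhammer_Gamma[OF notint_nonpos[OF assms], of n]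
    by (simp add: poch_int_def)
next
  case False
  define m where "m = nat (-k)"
  have k: "k = - int m" using False m_def by simp
  have "pochhammer (a + of_int k) m = Gamma (a + of_int k + of_nat m) / Gamma (a + of_int k)"
    by (rule pochhammer_Gamma[OF notint_nonpos[OF notint_shift[OF assms]]])
  also have "a + of_int k + of_nat m = a" using k by simp
  finally have pm: "pochhammer (a + of_int k) m = Gamma a / Gamma (a + of_int k)" .
  have pk: "poch_int a k = inverse (pochhammer (a + of_int k) m)"
    using False unfolding poch_int_def m_def by simp
  show ?thesis unfolding pk pm by simp
qed

lemma poch_1m:
  assumes "(z::complex) \<notin> \<int>"
  shows "pochhammer (1 - z) j = (-1)^j * Gamma z / Gamma (z - of_nat j)"
proof -
  have "pochhammer (1 - z) j = pochhammer (- (z - 1)) j" by simp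
  also have "\<dots> = (-1)^j * pochhammer (z - of_nat j) j"
    by (subst pochhammer_minus) (simp add: algebra_simps)
  also have "pochhammer (z - of_nat j) j = Gamma (z - of_nat j + of_nat j) / Gamma (z - of_nat j)"
    using pochhammer_Gamma[OF notint_nonpos[OF notint_shift[OF assms, of "- int j"]], of j]
    by simp
  finally show ?thesis by simp
qed

lemma poch_1m_ne: "(a::complex) \<notin> \<int> \<Longrightarrow> pochhammer (1 - a) j \<noteq> 0"
proof
  assume "a \<notin> \<int>" "pochhammer (1 - a) j = 0"
  then obtain m::nat where "1 - a = - of_nat m" by (auto simp: pochhammer_eq_0_iff)
  then have "a = of_nat (m+1)" by (simp add: algebra_simps)
  with \<open>a \<notin> \<int>\<close> show False by (metis Ints_of_nat)
qed

definition FF :: "complex \<Rightarrow> complex \<Rightarrow> nat \<Rightarrow> complex" where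
  "FF c x q = (\<Sum>k\<le>q. (-1)^(q-k) * of_nat (q choose k) * pochhammer x k / pochhammer c k)"

lemma FF_rec:
  assumes "c \<noteq> 0"
  shows "FF c x (Suc q) = - FF c x q + x / c * FF (c+1) (x+1) q"
proof -
  have A: "FF c x (Suc q) = (\<Sum>k\<le>Suc q. (-1)^(Suc q-k) * of_nat (q choose k) * pochhammer x k / pochhammer c k)
     + (\<Sum>k\<le>Suc q. (if k = 0 then 0 else (-1)^(Suc q-k) * of_nat (q choose (k-1)) * pochhammer x k / pochhammer c k))"
    unfolding FF_def sum.distrib[symmetric]
  proof (rule sum.cong[OF refl])
    fix k assume "k \<in> {..Suc q}"
    show "(-1)^(Suc q-k) * of_nat (Suc q choose k) * pochhammer x k / pochhammer c k =
      (-1)^(Suc q-k) * of_nat (q choose k) * pochhammer x k / pochhammer c k +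
      (if k = 0 then 0 else (-1)^(Suc q-k) * of_nat (q choose (k-1)) * pochhammer x k / pochhammer c k)"
      by (cases k) (simp_all add: add_divide_distrib distrib_left distrib_right)
  qed
  have B: "(\<Sum>k\<le>Suc q. (-1)^(Suc q-k) * of_nat (q choose k) * pochhammer x k / pochhammer c k :: complex) = - FF c x q"
    unfolding FF_def sum.atMost_Suc
    by (auto simp add: sum_negf[symmetric] Suc_diff_le intro!: sum.cong)
  have C: "(\<Sum>k\<le>Suc q. (if k = 0 then 0 else (-1)^(Suc q-k) * of_nat (q choose (k-1)) * pochhammer x k / pochhammer c k)) 
     = x / c * FF (c+1) (x+1) q"
    unfolding FF_def sum.atMost_Suc_shift sum_distrib_left
    using assms by (auto intro!: sum.cong simp: pochhammer_rec field_simps)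
  show ?thesis using A B C by simp
qed

lemma FF_closed:
  assumes "\<forall>m::nat. c \<noteq> - of_nat m"
  shows "pochhammer c q * FF c x q = (-1)^q * pochhammer (c - x) q"
  using assms
proof (induction q arbitrary: c x)
  case 0
  then show ?case by (simp add: FF_def)
next
  case (Suc q)
  have c0: "c \<noteq> 0" using Suc.prems[rule_format, of 0] by simp
  have c1: "\<forall>m::nat. c + 1 \<noteq> - of_nat m"
  proof
    fix m :: nat show "c + 1 \<noteq> - of_nat m"
    proof
      assume "c + 1 = - of_nat m"
      have "c = (c + 1) - 1" by simp
      also have "\<dots> = - of_nat m - 1" by (simp only: \<open>c + 1 = - of_nat m\<close>)
      finally have "c = - of_nat m - 1" .
      moreover have "c \<noteq> - of_nat (Suc m)" using Suc.prems by blast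
      ultimately show False by simp
    qed
  qed
  have I1: "pochhammer c q * FF c x q = (-1)^q * pochhammer (c - x) q" using Suc.IH[OF Suc.prems] .
  have I2: "pochhammer (c+1) q * FF (c+1) (x+1) q = (-1)^q * pochhammer (c - x) q"
    using Suc.IH[OF c1, of "x+1"] by simp
  have "pochhammer c (Suc q) * FF c x (Suc q) =
     - (c + of_nat q) * (pochhammer c q * FF c x q) + x * (pochhammer (c+1) q * FF (c+1) (x+1) q)"
  proof -
    have "pochhammer c (Suc q) * FF c x (Suc q) = pochhammer c (Suc q) * (- FF c x q) + pochhammer c (Suc q) * (x / c * FF (c+1) (x+1) q)"
      by (simp add: FF_rec[OF c0] algebra_simps)
    also have "pochhammer c (Suc q) * (- FF c x q) = - (c + of_nat q) * (pochhammer c q * FF c x q)"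
      by (simp add: pochhammer_Suc algebra_simps)
    also have "pochhammer c (Suc q) * (x / c * FF (c+1) (x+1) q) = x * (pochhammer (c+1) q * FF (c+1) (x+1) q)"
      using c0 by (simp add: pochhammer_rec)
    finally show ?thesis .
  qed
  also have "\<dots> = (-1)^Suc q * pochhammer (c - x) (Suc q)"
    unfolding I1 I2 pochhammer_Suc by (simp add: algebra_simps)
  finally show ?case .
qed

lemma lsum_nat:
  assumes "1 \<le> k"
  shows "(\<Sum>l=1..k. ((k-1) choose (l-1)) * (p choose l)) = (p + (k - 1)) choose k"
proof -
  have "(p + (k - 1)) choose k = (\<Sum>i\<le>k. (p choose i) * ((k-1) choose (k - i)))"
    by (rule vandermonde[symmetric])
  also have "\<dots> = (\<Sum>i\<in>insert 0 {1..k}. (p choose i) * ((k-1) choose (k - i)))"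
    by (rule sum.cong) auto
  also have "\<dots> = (\<Sum>i=1..k. (p choose i) * ((k-1) choose (k - i)))"
    using assms by (subst sum.insert) auto
  also have "\<dots> = (\<Sum>l=1..k. ((k-1) choose (l-1)) * (p choose l))"
  proof (rule sum.cong[OF refl])
    fix i assume "i \<in> {1..k}"
    then have "(k-1) choose (i-1) = (k-1) choose ((k-1) - (i-1))"
      by (intro binomial_symmetric) auto
    also have "(k-1) - (i-1) = k - i" using \<open>i \<in> {1..k}\<close> by auto
    finally show "(p choose i) * ((k-1) choose (k - i)) = ((k-1) choose (i-1)) * (p choose i)"
      by simp
  qed
  finally show ?thesis by simp
qed

lemma lsum:
  assumes "1 \<le> k"
  shows "(\<Sum>l=1..k. if l \<le> p then fact (k-1) / (fact (l-1) * fact l * fact (k-l) * fact (p-l)) else 0 :: complex)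
     = pochhammer (of_nat p) k / (fact k * fact p)"
proof -
  have "(\<Sum>l=1..k. if l \<le> p then fact (k-1) / (fact (l-1) * fact l * fact (k-l) * fact (p-l)) else 0 :: complex)
      = (\<Sum>l=1..k. of_nat (((k-1) choose (l-1)) * (p choose l)) / fact p)"
  proof (rule sum.cong[OF refl])
    fix l assume l: "l \<in> {1..k}"
    show "(if l \<le> p then fact (k-1) / (fact (l-1) * fact l * fact (k-l) * fact (p-l)) else 0 :: complex)
      = of_nat (((k-1) choose (l-1)) * (p choose l)) / fact p"
    proof (cases "l \<le> p")
      case True
      have e1: "(of_nat ((k-1) choose (l-1)) :: complex) = fact (k-1) / (fact (l-1) * fact (k-l))"
      proof -
        have "l - 1 \<le> k - 1" "(k-1) - (l-1) = k - l" using l by auto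
        then show ?thesis using binomial_fact[of "l-1" "k-1", where 'a=complex] by simp
      qed
      have e2: "(of_nat (p choose l) :: complex) = fact p / (fact l * fact (p-l))"
        using binomial_fact[of l p] True by simp
      show ?thesis unfolding of_nat_mult e1 e2 using True by (simp add: field_simps)
    qed simp
  qed
  also have "\<dots> = of_nat (\<Sum>l=1..k. ((k-1) choose (l-1)) * (p choose l)) / fact p"
    by (simp only: of_nat_sum sum_divide_distrib)
  also have "\<dots> = of_nat ((p + (k - 1)) choose k) / fact p"
    by (simp only: lsum_nat[OF assms])
  also have "(of_nat ((p + (k - 1)) choose k) :: complex) = pochhammer (of_nat p) k / fact k"
  proof -
    have "(of_nat ((p + (k - 1)) choose k) :: complex) = of_nat (p + (k - 1)) gchoose k"
      by (rule binomial_gbinomial)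
    also have "\<dots> = pochhammer (of_nat (p + (k-1)) - of_nat k + 1) k / fact k"
      by (rule gbinomial_pochhammer')
    also have "of_nat (p + (k-1)) - of_nat k + 1 = (of_nat p :: complex)"
      using assms by (simp add: of_nat_diff)
    finally show ?thesis .
  qed
  finally show ?thesis by simp
qed

lemma poch_d_ne: "\<forall>n::nat. (d::complex) \<noteq> - of_nat n \<Longrightarrow> pochhammer d m \<noteq> 0"
  by (auto simp: pochhammer_eq_0_iff)

lemma term_eq:
  fixes a b d :: complex
  assumes ha: "a \<notin> \<int>" and hd: "\<forall>n::nat. d \<noteq> - of_nat n"
    and kl: "1 \<le> l" "l \<le> k" "k \<le> q" "l \<le> p"
  shows "((-1) ^ (k - l) * fact (k - 1) / (fact (l - 1) * fact l * fact (k - l))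
               * pochhammer b k
               / (pochhammer (1 - a) k * pochhammer (1 - a) (k - l) * pochhammer d l))
         * ((-1)^(q-k) * H4 (a - of_nat k + of_nat l) (b + of_nat k) (d + of_nat l) (p-l) (q-k))
   = pochhammer b q / pochhammer d p * poch_int a (int p - int q) *
     ((-1)^(q-k) / (pochhammer (1-a) k * fact (q-k)) *
      (fact (k-1) / (fact (l-1) * fact l * fact (k-l) * fact (p-l))))"
proof -
  define j where "j = k - l"
  define n where "n = int p - int q"
  have arg: "int (p-l) - int (q-k) = n + int j" using kl unfolding n_def j_def by auto
  have e1: "a - of_nat k + of_nat l = a + of_int (- int j)"
    using kl unfolding j_def by (simp add: of_nat_diff)
  have P1: "poch_int (a - of_nat k + of_nat l) (int (p-l) - int (q-k)) = Gamma (a + of_int n) / Gamma (a - of_nat j)"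
    unfolding e1 arg poch_int_Gamma[OF notint_shift[OF ha]] by simp
  have P2: "poch_int a n = Gamma (a + of_int n) / Gamma a"
    by (rule poch_int_Gamma[OF ha])
  have P3: "pochhammer (1 - a) j = (-1)^j * Gamma a / Gamma (a - of_nat j)"
    by (rule poch_1m[OF ha])
  have P4: "pochhammer b q = pochhammer b k * pochhammer (b + of_nat k) (q-k)"
    using kl by (intro pochhammer_product) auto
  have P5: "pochhammer d p = pochhammer d l * pochhammer (d + of_nat l) (p-l)"
    using kl by (intro pochhammer_product) auto
  have nz1: "Gamma a \<noteq> 0" using Gamma_shift_ne[OF ha, of 0] by simp
  have nz2: "Gamma (a - of_nat j) \<noteq> 0" using Gamma_shift_ne[OF ha, of "- int j"] by simp
  have nz3: "pochhammer (1-a) k \<noteq> 0" by (rule poch_1m_ne[OF ha])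
  have nz4: "pochhammer d l \<noteq> 0" "pochhammer (d + of_nat l) (p-l) \<noteq> 0"
    using poch_d_ne[OF hd, of p] unfolding P5 by auto
  have sg: "(-1)^j * (-1)^j = (1::complex)" by (simp flip: power_add)
  have jj: "k - l = j" by (simp add: j_def)
  show ?thesis
    unfolding H4_def P1 P4 P5 jj P3 n_def[symmetric] P2
    using nz1 nz2 nz3 nz4 sg by (simp add: field_simps)
qed

lemma bmult_ser: "bmult (ser_x f) (ser_y g) p q = f p * g q"
proof -
  have "bmult (ser_x f) (ser_y g) p q = (\<Sum>i\<le>p. \<Sum>j\<le>q. if j = 0 then (if i = p then f p * g q else 0) else 0)"
    unfolding bmult_def ser_x_def ser_y_def by (intro sum.cong refl) auto
  also have "\<dots> = (\<Sum>i\<le>p. if i = p then f p * g q else 0)"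
    by (rule sum.cong[OF refl]) (simp only: sum.delta sum.delta' finite_atMost atMost_iff le0 if_True)
  also have "\<dots> = f p * g q"
    by (simp only: sum.delta sum.delta' finite_atMost atMost_iff order_refl if_True)
  finally show ?thesis .
qed

lemma one_minus_ok: "(a::complex) \<notin> \<int> \<Longrightarrow> \<forall>m::nat. 1 - a \<noteq> - of_nat m"
proof (intro allI notI)
  fix m :: nat assume "a \<notin> \<int>" "1 - a = - of_nat m"
  then have "a = of_nat (m+1)" by (simp add: algebra_simps)
  with \<open>a \<notin> \<int>\<close> show False by (metis Ints_of_nat)
qed

lemma infsum_fin:
  fixes T :: "nat \<Rightarrow> nat \<Rightarrow> complex"
  assumes "\<And>k l. q < k \<Longrightarrow> T k l = 0"
  shows "(\<Sum>\<^sub>\<infinity>i\<in>{(k,l). 1 \<le> l \<and> l \<le> k}. T (fst i) (snd i)) = (\<Sum>k=1..q. \<Sum>l=1..k. T k l)"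
proof -
  let ?B = "Sigma {1..q} (\<lambda>k. {1..k})"
  have "(\<Sum>\<^sub>\<infinity>i\<in>{(k,l). 1 \<le> l \<and> l \<le> k}. T (fst i) (snd i)) = (\<Sum>\<^sub>\<infinity>i\<in>?B. T (fst i) (snd i))"
    by (rule infsum_cong_neutral) (auto simp: not_le intro!: assms)
  also have "\<dots> = (\<Sum>i\<in>?B. T (fst i) (snd i))" by (simp add: finite_SigmaI)
  also have "\<dots> = (\<Sum>k=1..q. \<Sum>l=1..k. T k l)"
    by (simp add: sum.Sigma split_beta)
  finally show ?thesis .
qed

theorem mainTheorem9:
  fixes a b d :: complex
  assumes ha: "a \<notin> \<int>"
    and hd: "\<forall>n::nat. d \<noteq> - of_nat n"
  shows "bmult (ser_x (hyp1F1 a d)) (ser_y (hyp1F1 b (1 - a))) =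
    badd (neg_y (H4 a b d))
      (bsum (\<lambda>(k, l). bscale
              ((-1) ^ (k - l) * fact (k - 1) / (fact (l - 1) * fact l * fact (k - l))
               * pochhammer b k
               / (pochhammer (1 - a) k * pochhammer (1 - a) (k - l) * pochhammer d l))
              (mono_mult l k (neg_y (H4 (a - of_nat k + of_nat l) (b + of_nat k) (d + of_nat l)))))
        {(k, l). 1 \<le> l \<and> l \<le> k})"
proof (intro ext)
  fix p q
  define n where "n = int p - int q"
  define A0 where "A0 = pochhammer b q / pochhammer d p * poch_int a n"
  define Cf where "Cf = (\<lambda>k l. (-1) ^ (k - l) * fact (k - 1) / (fact (l - 1) * fact l * fact (k - l))
               * pochhammer b k
               / (pochhammer (1 - a) k * pochhammer (1 - a) (k - l) * pochhammer d l) :: complex)"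
  define T where "T = (\<lambda>k l. Cf k l * (if l \<le> p \<and> k \<le> q then (-1)^(q-k) *
       H4 (a - of_nat k + of_nat l) (b + of_nat k) (d + of_nat l) (p-l) (q-k) else 0))"
  define X where "X = (\<lambda>k. (-1)^(q-k) / (pochhammer (1-a) k * fact (q-k)) * (pochhammer (of_nat p) k / (fact k * fact p)) :: complex)"
  have R1: "badd (neg_y (H4 a b d))
      (bsum (\<lambda>(k, l). bscale
              ((-1) ^ (k - l) * fact (k - 1) / (fact (l - 1) * fact l * fact (k - l))
               * pochhammer b k
               / (pochhammer (1 - a) k * pochhammer (1 - a) (k - l) * pochhammer d l))
              (mono_mult l k (neg_y (H4 (a - of_nat k + of_nat l) (b + of_nat k) (d + of_nat l)))))
        {(k, l). 1 \<le> l \<and> l \<le> k}) p q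
     = (-1)^q * H4 a b d p q + (\<Sum>\<^sub>\<infinity>i\<in>{(k,l). 1 \<le> l \<and> l \<le> k}. T (fst i) (snd i))"
    by (simp only: badd_def bsum_def bscale_def mono_mult_def neg_y_def split_beta T_def Cf_def)
  have R2: "(\<Sum>\<^sub>\<infinity>i\<in>{(k,l). 1 \<le> l \<and> l \<le> k}. T (fst i) (snd i)) = (\<Sum>k=1..q. \<Sum>l=1..k. T k l)"
    by (rule infsum_fin) (simp add: T_def)
  have R3: "(\<Sum>l=1..k. T k l) = A0 * X k" if k: "k \<in> {1..q}" for k
  proof -
    have "(\<Sum>l=1..k. T k l) = (\<Sum>l=1..k. A0 * ((-1)^(q-k) / (pochhammer (1-a) k * fact (q-k))) *
         (if l \<le> p then fact (k-1) / (fact (l-1) * fact l * fact (k-l) * fact (p-l)) else 0))"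
    proof (rule sum.cong[OF refl])
      fix l assume l: "l \<in> {1..k}"
      show "T k l = A0 * ((-1)^(q-k) / (pochhammer (1-a) k * fact (q-k))) *
         (if l \<le> p then fact (k-1) / (fact (l-1) * fact l * fact (k-l) * fact (p-l)) else 0)"
      proof (cases "l \<le> p")
        case True
        then show ?thesis using term_eq[OF ha hd, of l k q p b] l k
          unfolding T_def Cf_def A0_def n_def by (simp add: mult.assoc)
      qed (simp add: T_def)
    qed
    also have "\<dots> = A0 * ((-1)^(q-k) / (pochhammer (1-a) k * fact (q-k))) *
        (\<Sum>l=1..k. if l \<le> p then fact (k-1) / (fact (l-1) * fact l * fact (k-l) * fact (p-l)) else 0)"
      by (simp only: sum_distrib_left)
    also have "\<dots> = A0 * X k"
    proof -
      have k1: "1 \<le> k" using k by simp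
      show ?thesis unfolding lsum[OF k1] X_def by simp
    qed
    finally show ?thesis .
  qed
  define W where "W = (\<lambda>k. (-1)^(q-k) * of_nat (q choose k) * pochhammer (of_nat p) k / pochhammer (1-a) k :: complex)"
  have W: "A0 * X k = A0 / (fact p * fact q) * W k" if "k \<le> q" for k
  proof -
    have e: "(of_nat (q choose k) :: complex) = fact q / (fact k * fact (q-k))"
      by (rule binomial_fact[OF that])
    have "pochhammer (1-a) k \<noteq> 0" by (rule poch_1m_ne[OF ha])
    then show ?thesis unfolding X_def W_def e by (simp add: field_simps)
  qed
  have FFs: "FF (1-a) (of_nat p) q = W 0 + (\<Sum>k=1..q. W k)"
  proof -
    have "FF (1-a) (of_nat p) q = (\<Sum>k\<in>insert 0 {1..q}. W k)"
      unfolding FF_def W_def by (rule sum.cong) auto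
    then show ?thesis by simp
  qed
  have H0: "(-1)^q * H4 a b d p q = A0 / (fact p * fact q) * W 0"
    unfolding H4_def A0_def W_def n_def by (simp add: mult_ac)
  have RHS: "(-1)^q * H4 a b d p q + (\<Sum>k=1..q. \<Sum>l=1..k. T k l) = A0 / (fact p * fact q) * FF (1-a) (of_nat p) q"
    unfolding FFs H0 distrib_left sum_distrib_left using R3 W by simp
  have FFc: "pochhammer (1-a) q * FF (1-a) (of_nat p) q = (-1)^q * pochhammer (1 - (a + of_nat p)) q"
    using FF_closed[OF one_minus_ok[OF ha], of q "of_nat p"] by (simp add: algebra_simps)
  have hap: "a + of_nat p \<notin> \<int>" using notint_shift[OF ha, of "int p"] by simp
  have G1: "pochhammer (1 - (a + of_nat p)) q = (-1)^q * Gamma (a + of_nat p) / Gamma (a + of_int n)"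
    using poch_1m[OF hap, of q] unfolding n_def by (simp add: add_diff_eq)
  have G2: "poch_int a n = Gamma (a + of_int n) / Gamma a" by (rule poch_int_Gamma[OF ha])
  have G3: "pochhammer a p = Gamma (a + of_nat p) / Gamma a"
    using poch_int_Gamma[OF ha, of "int p"] by (simp add: poch_int_def)
  have nz1: "Gamma a \<noteq> 0" using Gamma_shift_ne[OF ha, of 0] by simp
  have nz2: "Gamma (a + of_int n) \<noteq> 0" using Gamma_shift_ne[OF ha] by simp
  have nz3: "pochhammer (1-a) q \<noteq> 0" by (rule poch_1m_ne[OF ha])
  have nz4: "pochhammer d p \<noteq> 0" by (rule poch_d_ne[OF hd])
  have sg: "(-1)^q * (-1)^q = (1::complex)" by (simp flip: power_add)
  have FFv: "FF (1-a) (of_nat p) q = Gamma (a + of_nat p) / Gamma (a + of_int n) / pochhammer (1-a) q"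
    using FFc nz3 nz2 sg unfolding G1 by (simp add: field_simps)
  show "bmult (ser_x (hyp1F1 a d)) (ser_y (hyp1F1 b (1 - a))) p q = badd (neg_y (H4 a b d))
      (bsum (\<lambda>(k, l). bscale
              ((-1) ^ (k - l) * fact (k - 1) / (fact (l - 1) * fact l * fact (k - l))
               * pochhammer b k
               / (pochhammer (1 - a) k * pochhammer (1 - a) (k - l) * pochhammer d l))
              (mono_mult l k (neg_y (H4 (a - of_nat k + of_nat l) (b + of_nat k) (d + of_nat l)))))
        {(k, l). 1 \<le> l \<and> l \<le> k}) p q"
    unfolding R1 R2 RHS bmult_ser FFv A0_def G2 hyp1F1_def G3
    using nz1 nz2 nz3 nz4 by (simp add: field_simps)
qed

end
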